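(* Assume CH. Then there is no separable regular Baire $\sigma$-space $X$ with $dis(X)<\Delta(X)$.
   Context: All spaces are Hausdorff. CH is the Continuum Hypothesis $2^{\aleph_0}=\aleph_1$. $dis(X)$ is the least number of discrete subspaces needed to cover $X$; $\Delta(X)$ is the least cardinality of a non-empty open subset of $X$. A $\sigma$-space is a space having a $\sigma$-discrete network (a network being a family $\mathcal{N}$ of subsets such that for every open $U$ and $x\in U$ there is $N\in\mathcal{N}$ with $x\in N\subseteq U$). *)

theory Defs
  imports "HOL-Analysis.Analysis"
begin

unbundle cardinal_syntax

definition CH :: bool where
  "CH \<longleftrightarrow> |Pow (UNIV :: nat set)| =o cardSuc |UNIV :: nat set|"

definition discrete_subspace :: "'a topology \<Rightarrow> 'a set \<Rightarrow> bool" where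
  "discrete_subspace X D \<longleftrightarrow> D \<subseteq> topspace X \<and> subtopology X D = discrete_topology D"

definition Baire_space :: "'a topology \<Rightarrow> bool" where
  "Baire_space X \<longleftrightarrow>
     (\<forall>\<U>. countable \<U> \<and> (\<forall>U\<in>\<U>. openin X U \<and> X closure_of U = topspace X)
        \<longrightarrow> X closure_of (topspace X \<inter> \<Inter>\<U>) = topspace X)"

definition network :: "'a topology \<Rightarrow> 'a set set \<Rightarrow> bool" where
  "network X \<N> \<longleftrightarrow> (\<forall>N\<in>\<N>. N \<subseteq> topspace X) \<and>
     (\<forall>U x. openin X U \<and> x \<in> U \<longrightarrow> (\<exists>N\<in>\<N>. x \<in> N \<and> N \<subseteq> U))"

definition discrete_family :: "'a topology \<Rightarrow> 'a set set \<Rightarrow> bool" where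
  "discrete_family X \<A> \<longleftrightarrow>
     (\<forall>x\<in>topspace X. \<exists>U. openin X U \<and> x \<in> U \<and>
        (\<forall>A\<in>\<A>. \<forall>B\<in>\<A>. A \<inter> U \<noteq> {} \<and> B \<inter> U \<noteq> {} \<longrightarrow> A = B))"

definition sigma_discrete :: "'a topology \<Rightarrow> 'a set set \<Rightarrow> bool" where
  "sigma_discrete X \<N> \<longleftrightarrow> (\<exists>F :: nat \<Rightarrow> 'a set set. \<N> = (\<Union>n. F n) \<and> (\<forall>n. discrete_family X (F n)))"

definition sigma_space :: "'a topology \<Rightarrow> bool" where
  "sigma_space X \<longleftrightarrow> (\<exists>\<N>. network X \<N> \<and> sigma_discrete X \<N>)"

text \<open>dis(X) < Delta(X), for a nonempty space X (so that Delta(X) is defined):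
  there is a cover of X by discrete subspaces whose number is strictly smaller than the
  cardinality of every nonempty open subset (Delta(X) being the minimum of these cardinalities).\<close>
definition dis_less_Delta :: "'a topology \<Rightarrow> bool" where
  "dis_less_Delta X \<longleftrightarrow> topspace X \<noteq> {} \<and>
     (\<exists>\<D>. (\<forall>D\<in>\<D>. discrete_subspace X D) \<and> \<Union>\<D> = topspace X \<and>
        (\<forall>U. openin X U \<and> U \<noteq> {} \<longrightarrow> card_of \<D> <o card_of U))"

end

theory Submission
  imports Defs
begin

lemma disc_unique:
  assumes "discrete_family X F" "x \<in> topspace X" "A \<in> F" "B \<in> F" "x \<in> A" "x \<in> B"
  shows "A = B"
  using assms unfolding discrete_family_def by blast

lemma disc_sep:
  assumes reg: "regular_space X" and df: "discrete_family X F"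
    and sub: "\<forall>A\<in>F. A \<subseteq> topspace X" and AF: "A \<in> F" and aA: "a \<in> A"
  shows "\<exists>V. openin X V \<and> a \<in> V \<and> (\<forall>B\<in>F. B \<noteq> A \<longrightarrow> X closure_of V \<inter> B = {})"
proof -
  have at: "a \<in> topspace X" using sub AF aA by blast
  then obtain U where U: "openin X U" "a \<in> U"
    and one: "\<forall>A\<in>F. \<forall>B\<in>F. A \<inter> U \<noteq> {} \<and> B \<inter> U \<noteq> {} \<longrightarrow> A = B"
    using df at unfolding discrete_family_def by auto
  define C where "C = X closure_of (\<Union>(F - {A}))"
  have "U \<inter> \<Union>(F - {A}) = {}"
  proof (rule ccontr)
    assume "U \<inter> \<Union>(F - {A}) \<noteq> {}"
    then obtain B x where B: "B \<in> F" "B \<noteq> A" "x \<in> B" "x \<in> U" by blast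
    have "B \<inter> U \<noteq> {}" "A \<inter> U \<noteq> {}" using B aA U(2) by auto
    hence "B = A" using one AF B(1) by blast
    thus False using B(2) by blast
  qed
  hence "U \<inter> C = {}" unfolding C_def using openin_Int_closure_of_eq_empty[OF U(1)] by blast
  hence "a \<in> topspace X - C" using at U(2) by blast
  moreover have "closedin X C" unfolding C_def by simp
  ultimately have "\<exists>V W. openin X V \<and> openin X W \<and> a \<in> V \<and> C \<subseteq> W \<and> disjnt V W"
    using reg unfolding regular_space_def by blast
  then obtain V W where VW: "openin X V" "openin X W" "a \<in> V" "C \<subseteq> W" "disjnt V W"
    by blast
  have s1: "V \<subseteq> topspace X - W" using openin_subset[OF VW(1)] VW(5) by (auto simp: disjnt_def)
  have s2: "closedin X (topspace X - W)" using VW(2) by (simp add: closedin_diff)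
  have "X closure_of V \<subseteq> topspace X - W" using closure_of_minimal[OF s1 s2] .
  moreover have "\<Union>(F - {A}) \<subseteq> C" unfolding C_def
    by (rule closure_of_subset) (use sub in blast)
  ultimately have "\<forall>B\<in>F. B \<noteq> A \<longrightarrow> X closure_of V \<inter> B = {}" using VW(4) by blast
  thus ?thesis using VW by blast
qed

lemma card_bound:
  fixes F :: "nat \<Rightarrow> 'a set set"
  assumes sep: "separable_space X" and H: "Hausdorff_space X" and reg: "regular_space X"
    and net: "network X (\<Union>n. F n)" and df: "\<forall>n. discrete_family X (F n)"
  shows "|topspace X| \<le>o |UNIV :: nat set set|"
proof -
  obtain D where D: "countable D" "D \<subseteq> topspace X" "X closure_of D = topspace X"
    using sep unfolding separable_space_def by blast
  have sub: "\<forall>n. \<forall>A\<in>F n. A \<subseteq> topspace X" using net unfolding network_def by blast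
  define P where "P n A V \<longleftrightarrow> openin X V \<and> (\<exists>a\<in>A. a \<in> V) \<and>
      (\<forall>B\<in>F n. B \<noteq> A \<longrightarrow> X closure_of V \<inter> B = {})" for n A V
  define Vf where "Vf n A = (SOME V. P n A V)" for n A
  have VfP: "P n A (Vf n A)" if AF: "A \<in> F n" and Ane: "A \<noteq> {}" for n A
  proof -
    obtain a where "a \<in> A" using Ane by blast
    then obtain V where "openin X V \<and> a \<in> V \<and> (\<forall>B\<in>F n. B \<noteq> A \<longrightarrow> X closure_of V \<inter> B = {})"
      using disc_sep[OF reg spec[OF df, of n] spec[OF sub, of n] AF] by blast
    hence "P n A V" unfolding P_def using \<open>a \<in> A\<close> by blast
    thus ?thesis unfolding Vf_def by (rule someI)
  qed
  have clo: "X closure_of (V \<inter> D) = X closure_of V" if "openin X V" for V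
    using closure_of_openin_Int_closure_of[OF that, of D] D(3) openin_subset[OF that]
    by (simp add: Int_absorb2)
  have ne: "Vf n A \<inter> D \<noteq> {}" if "A \<in> F n" "A \<noteq> {}" for n A
  proof
    assume e: "Vf n A \<inter> D = {}"
    from VfP[OF that] obtain a where a: "openin X (Vf n A)" "a \<in> Vf n A" unfolding P_def by blast
    have "X closure_of (Vf n A) = {}" using clo[OF a(1)] e by simp
    moreover have "a \<in> X closure_of (Vf n A)"
      using closure_of_subset[OF openin_subset[OF a(1)]] a(2) by blast
    ultimately show False by blast
  qed
  have dif: "Vf n A \<inter> D \<noteq> Vf n B \<inter> D" if "A \<in> F n" "A \<noteq> {}" "B \<in> F n" "B \<noteq> {}" "A \<noteq> B" for n A B
  proof
    assume e: "Vf n A \<inter> D = Vf n B \<inter> D"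
    from VfP[OF that(1,2)] have pa: "openin X (Vf n A)" "\<forall>C\<in>F n. C \<noteq> A \<longrightarrow> X closure_of (Vf n A) \<inter> C = {}"
      unfolding P_def by auto
    from VfP[OF that(3,4)] obtain b where pb: "openin X (Vf n B)" "b \<in> B" "b \<in> Vf n B"
      unfolding P_def by blast
    have "X closure_of (Vf n A) = X closure_of (Vf n A \<inter> D)" using clo[OF pa(1)] by simp
    also have "\<dots> = X closure_of (Vf n B \<inter> D)" using e by simp
    also have "\<dots> = X closure_of (Vf n B)" using clo[OF pb(1)] by simp
    finally have "X closure_of (Vf n A) = X closure_of (Vf n B)" .
    moreover have "b \<in> X closure_of (Vf n B)" using closure_of_subset[OF openin_subset[OF pb(1)]] pb(3) by blast
    ultimately show False using pa(2) that(3,5) pb(2) by blast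
  qed
  define code where "code x = {(n,d). d \<in> D \<and> (\<exists>A\<in>F n. x \<in> A \<and> d \<in> Vf n A)}" for x
  have slice: "{d. (n,d) \<in> code x} = Vf n A \<inter> D" if "x \<in> topspace X" "A \<in> F n" "x \<in> A" for x n A
  proof -
    have u: "\<And>B. B \<in> F n \<Longrightarrow> x \<in> B \<Longrightarrow> B = A"
      using disc_unique[OF spec[OF df, of n] that(1)] that(2,3) by blast
    have "(n,d) \<in> code x \<longleftrightarrow> d \<in> D \<and> (\<exists>B\<in>F n. x \<in> B \<and> d \<in> Vf n B)" for d
      unfolding code_def by simp
    moreover have "(\<exists>B\<in>F n. x \<in> B \<and> d \<in> Vf n B) \<longleftrightarrow> d \<in> Vf n A" for d
      using u that(2,3) by metis
    ultimately show ?thesis by blast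
  qed
  have slice0: "{d. (n,d) \<in> code x} = {}" if "\<forall>A\<in>F n. x \<notin> A" for x n
    using that unfolding code_def by blast
  have inj: "inj_on code (topspace X)"
  proof (rule inj_onI, rule ccontr)
    fix x y assume x: "x \<in> topspace X" and y: "y \<in> topspace X" and e: "code x = code y" and ne': "x \<noteq> y"
    have "t1_space X" using H by (rule Hausdorff_imp_t1_space)
    hence "\<forall>U z. openin X U \<longrightarrow> openin X (U - {z})" by (simp only: t1_space_openin_delete_alt)
    hence "openin X (topspace X - {y})" by simp
    then obtain N where N: "N \<in> (\<Union>n. F n)" "x \<in> N" "N \<subseteq> topspace X - {y}"
      using net x ne' unfolding network_def by blast
    then obtain n where n: "N \<in> F n" by blast
    have sx: "{d. (n,d) \<in> code x} = Vf n N \<inter> D" using slice[OF x n N(2)] .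
    show False
    proof (cases "\<exists>B\<in>F n. y \<in> B")
      case True
      then obtain B where B: "B \<in> F n" "y \<in> B" by blast
      have "{d. (n,d) \<in> code y} = Vf n B \<inter> D" using slice[OF y B(1,2)] .
      moreover have "B \<noteq> N" using B N(3) by blast
      moreover have "N \<noteq> {}" "B \<noteq> {}" using N(2) B(2) by auto
      ultimately have "Vf n N \<inter> D \<noteq> Vf n B \<inter> D" using dif[OF n _ B(1)] by blast
      thus False using sx e \<open>{d. (n,d) \<in> code y} = Vf n B \<inter> D\<close> by simp
    next
      case False
      hence "{d. (n,d) \<in> code y} = {}" by (intro slice0) blast
      moreover have "N \<noteq> {}" using N(2) by auto
      ultimately show False using ne[OF n] sx e by simp
    qed
  qed
  define f where "f x = to_nat_on ((UNIV::nat set) \<times> D) ` code x" for x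
  have cs: "code x \<subseteq> (UNIV::nat set) \<times> D" for x unfolding code_def by (intro subsetI) clarsimp
  have ti: "inj_on (to_nat_on ((UNIV::nat set) \<times> D)) ((UNIV::nat set) \<times> D)"
    using D(1) by (intro inj_on_to_nat_on) simp
  have "inj_on f (topspace X)"
  proof (rule inj_onI)
    fix x y assume "x \<in> topspace X" "y \<in> topspace X" "f x = f y"
    hence "code x = code y" using inj_on_image_eq_iff[OF ti cs cs] unfolding f_def by simp
    thus "x = y" using inj_onD[OF inj _ \<open>x \<in> topspace X\<close> \<open>y \<in> topspace X\<close>] by blast
  qed
  hence "\<exists>g. inj_on g (topspace X) \<and> g ` topspace X \<subseteq> (UNIV :: nat set set)" by blast
  thus ?thesis unfolding card_of_ordLeq .
qed

lemma my_countable_card_of_nat: "countable A \<longleftrightarrow> |A| \<le>o |UNIV::nat set|"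
  unfolding countable_def card_of_ordLeq[symmetric] by auto

theorem mainTheorem12:
  assumes "CH"
  shows "\<not> (\<exists>X :: 'a topology. separable_space X \<and> Hausdorff_space X \<and> regular_space X
            \<and> Baire_space X \<and> sigma_space X \<and> dis_less_Delta X)"
proof
  assume "\<exists>X :: 'a topology. separable_space X \<and> Hausdorff_space X \<and> regular_space X
            \<and> Baire_space X \<and> sigma_space X \<and> dis_less_Delta X"
  then obtain X :: "'a topology" where sep: "separable_space X" and H: "Hausdorff_space X"
    and reg: "regular_space X" and B: "Baire_space X" and sig: "sigma_space X"
    and dl: "dis_less_Delta X" by blast
  from dl obtain \<D> where ne: "topspace X \<noteq> {}" and dD: "\<forall>D\<in>\<D>. discrete_subspace X D"
    and un: "\<Union>\<D> = topspace X" and lt: "\<forall>U. openin X U \<and> U \<noteq> {} \<longrightarrow> |\<D>| <o |U|"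
    unfolding dis_less_Delta_def by blast
  from sig obtain \<N> and F :: "nat \<Rightarrow> 'a set set" where net: "network X \<N>" and NF: "\<N> = (\<Union>n. F n)"
    and df: "\<forall>n. discrete_family X (F n)"
    unfolding sigma_space_def sigma_discrete_def by blast
  have bound: "|topspace X| \<le>o |UNIV :: nat set set|"
  proof -
    have "network X (\<Union>n. F n)" using net NF by simp
    thus ?thesis by (rule card_bound[OF sep H reg _ df])
  qed
  have t1: "t1_space X" using H by (rule Hausdorff_imp_t1_space)
  show False
  proof (cases "countable \<D>")
    case True
    have dense: "X closure_of (topspace X - X closure_of D) = topspace X" if DD: "D \<in> \<D>" for D
    proof (rule ccontr)
      assume "X closure_of (topspace X - X closure_of D) \<noteq> topspace X"
      moreover have "X closure_of (topspace X - X closure_of D) \<subseteq> topspace X"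
        by (rule closure_of_subset_topspace)
      ultimately obtain x where x: "x \<in> topspace X" "x \<notin> X closure_of (topspace X - X closure_of D)"
        by blast
      have "\<not> (\<forall>T. x \<in> T \<and> openin X T \<longrightarrow> (\<exists>y\<in>topspace X - X closure_of D. y \<in> T))"
        using x unfolding in_closure_of by blast
      then obtain U where U: "openin X U" "x \<in> U" "U \<inter> (topspace X - X closure_of D) = {}"
        by blast
      have Ucl: "U \<subseteq> X closure_of D" using U(3) openin_subset[OF U(1)] by blast
      have dsub: "D \<subseteq> topspace X" and sD: "subtopology X D = discrete_topology D"
        using dD DD unfolding discrete_subspace_def by blast+
      have "x \<in> X closure_of D" using Ucl U(2) by blast
      hence "\<forall>T. x \<in> T \<and> openin X T \<longrightarrow> (\<exists>y\<in>D. y \<in> T)" unfolding in_closure_of by blast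
      hence "x \<in> U \<and> openin X U \<longrightarrow> (\<exists>y\<in>D. y \<in> U)" by (rule spec)
      hence "\<exists>y\<in>D. y \<in> U" using U(1,2) by blast
      then obtain d where d: "d \<in> D" "d \<in> U" by blast
      have "openin (subtopology X D) {d}" using sD d(1) by simp
      hence "\<exists>V. openin X V \<and> {d} = V \<inter> D" by (simp only: openin_subtopology)
      then obtain V where V: "openin X V" "{d} = V \<inter> D" by blast
      define W where "W = U \<inter> V"
      have Wo: "openin X W" unfolding W_def using openin_Int[OF U(1) V(1)] .
      have t1': "\<forall>U z. openin X U \<longrightarrow> openin X (U - {z})"
        using t1 by (simp only: t1_space_openin_delete_alt)
      have "W \<subseteq> {d}"
      proof
        fix y assume yW: "y \<in> W"
        show "y \<in> {d}"
        proof (rule ccontr)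
          assume yd: "y \<notin> {d}"
          have Wd: "openin X (W - {d})" using t1' Wo by blast
          have "y \<in> X closure_of D" using yW Ucl unfolding W_def by blast
          hence "\<forall>T. y \<in> T \<and> openin X T \<longrightarrow> (\<exists>z\<in>D. z \<in> T)" unfolding in_closure_of by blast
          hence "y \<in> W - {d} \<and> openin X (W - {d}) \<longrightarrow> (\<exists>z\<in>D. z \<in> W - {d})" by (rule spec)
          moreover have "y \<in> W - {d}" using yW yd by blast
          ultimately have "\<exists>z\<in>D. z \<in> W - {d}" using Wd by blast
          then obtain z where "z \<in> D" "z \<in> W - {d}" by blast
          thus False using V(2) unfolding W_def by blast
        qed
      qed
      moreover have "d \<in> W" using V d unfolding W_def by blast
      ultimately have Weq: "W = {d}" by blast
      have "openin X {d}" using Wo unfolding Weq .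
      hence "openin X {d} \<and> {d} \<noteq> {}" by blast
      hence l1: "|\<D>| <o |{d}|" by (rule lt[rule_format])
      have "inj_on (\<lambda>_. D) {d} \<and> (\<lambda>_. D) ` {d} \<subseteq> \<D>" using DD by simp
      hence "\<exists>g. inj_on g {d} \<and> g ` {d} \<subseteq> \<D>" by blast
      hence l2: "|{d}| \<le>o |\<D>|" unfolding card_of_ordLeq .
      show False using not_ordLess_ordLeq[OF l1] l2 by simp
    qed
    define \<U> where "\<U> = (\<lambda>D. topspace X - X closure_of D) ` \<D>"
    have "countable \<U>" unfolding \<U>_def using True by simp
    moreover have "\<forall>U\<in>\<U>. openin X U \<and> X closure_of U = topspace X"
      unfolding \<U>_def using dense by auto
    ultimately have c: "X closure_of (topspace X \<inter> \<Inter>\<U>) = topspace X"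
      using B unfolding Baire_space_def by blast
    have "topspace X \<inter> \<Inter>\<U> = {}"
    proof (rule ccontr)
      assume "topspace X \<inter> \<Inter>\<U> \<noteq> {}"
      then obtain x where x: "x \<in> topspace X" "x \<in> \<Inter>\<U>" by blast
      then obtain D where D: "D \<in> \<D>" "x \<in> D" using un by blast
      have "D \<subseteq> topspace X" using dD D(1) unfolding discrete_subspace_def by blast
      hence "x \<in> X closure_of D" using D(2) closure_of_subset[of D X] by blast
      moreover have "x \<in> topspace X - X closure_of D" using x(2) D(1) unfolding \<U>_def by blast
      ultimately show False by blast
    qed
    thus False using c ne by simp
  next
    case False
    have "\<not> |\<D>| \<le>o |UNIV :: nat set|" using False my_countable_card_of_nat by blast
    hence l1: "|UNIV :: nat set| <o |\<D>|"
      using not_ordLeq_iff_ordLess[OF card_of_Well_order card_of_Well_order] by blast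
    have l2: "cardSuc |UNIV :: nat set| \<le>o |\<D>|"
      by (rule cardSuc_least[OF card_of_Card_order card_of_Card_order l1])
    have l3: "|UNIV :: nat set set| =o cardSuc |UNIV :: nat set|"
      using assms unfolding CH_def by simp
    have "|topspace X| \<le>o |\<D>|"
      using ordLeq_transitive[OF bound ordIso_ordLeq_trans[OF l3 l2]] .
    moreover have "|\<D>| <o |topspace X|" using lt ne by blast
    ultimately show False using not_ordLess_ordLeq by metis
  qed
qed

end
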